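(* Assume the setting in the context. Let $U\in C^1([0,T];X)$ with $U(t)\in D(d)\cap D(d^\star)$ and $\partial_tU(t)=J(d+d^\star)U(t)$ for all $t\in[0,T]$, and let $\hat U_h^N\in\mathcal{H}_h$ satisfy $$\mathcal{L}_h\big((\mathrm{Id}-P_{\mathfrak{H}})\hat U_h^N,V_h\big)=\big((\mathrm{Id}-P_{\mathfrak{H}})I_h\mathcal{T}^NU,V_h\big)_h\ \ \forall V_h\in\mathcal{H}_h,\qquad P_{\mathfrak{H}}\hat U_h^N=I_hP_{\mathfrak{H}}U(t_N).$$ Let $C_L>0$ be a constant such that $\sup_{W_h\in\mathfrak{H}_h^{\perp_h},W_h\ne0}\mathcal{L}_h(V_h,W_h)/\|W_h\|_{1,h}\ge C_L\|V_h\|_{1,h}$ for all $V_h\in\mathfrak{H}_h^{\perp_h}$. Then $$\big\|(\mathrm{Id}-P_{\mathfrak{H}})\big(I_hU(T)-\hat U_h^N\big)\big\|_{1,h}\le\frac{1}{C_L}\Big(\|\epsilon_h(U(T),\cdot)\|_{1,h}^{\ast}+\|I_h\epsilon_{\Delta t,N}(U)\|_h\Big).$$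
   Context: Continuous setting: $\Omega\subset\mathbb{R}^3$ a domain, $X:=L^2(\Omega;\mathbb{R}^3)\oplus L^2(\Omega;\mathbb{T})\oplus L^2(\Omega;\mathbb{S})\oplus L^2(\Omega;\mathbb{R})$ ($\mathbb{T}$ trace-free, $\mathbb{S}$ symmetric $3\times3$ matrices) with $L^2$ inner product; $d(u_0,u_1,u_2,u_3)=(0,\operatorname{dev}\operatorname{grad}u_0,\operatorname{sym}\operatorname{curl}u_1,\operatorname{div}\operatorname{div}u_2)$ on its natural domain $D(d)$ (the components of the $L^2$ spaces whose image is in $L^2$), $d^\star$ its Hilbert adjoint; $J=\operatorname{diag}(1,-1,1,-1)$. $P_{\mathfrak{H}}$ is the orthogonal projection onto the continuous harmonic forms $\operatorname{Ker}d\cap\operatorname{Ker}d^\star$. Time grid $0=t_0<\dots<t_N=T$; $\mathcal{T}^N$ is a linear map sending sequences $(v^m)_{0\le m\le N}$ in $X$ to $X$, and $\mathcal{T}^NU:=\mathcal{T}^N((U(t_m))_m)$; $\epsilon_{\Delta t,N}(U):=\mathcal{T}^NU-\partial_tU(t_N)$. Discrete setting: finite-dimensional inner product spaces $(\mathcal{H}^i_h,(\cdot,\cdot)_h)$, $i=0,\dots,3$, with linear $d_h:\mathcal{H}^i_h\to\mathcal{H}^{i+1}_h$, $d_h\circ d_h=0$; $\mathcal{H}_h=\prod_i\mathcal{H}^i_h$ with $(V,W)_h=\sum_i(v_i,w_i)_h$, $d_h(v_0,\dots,v_3)=(0,d_hv_0,d_hv_1,d_hv_2)$, graph norm $\|V\|_{1,h}=\|V\|_h+\|d_hV\|_h$;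 $\mathcal{L}_h(V,W):=(Jd_hV,W)_h-(V,Jd_hW)_h$. Linear interpolators $I_h^i$ from (subspaces of) the $i$-th component of $X$ to $\mathcal{H}^i_h$, $I_h:=\operatorname{diag}(I_h^i)$, satisfying the cochain property $d_hI_h^i=I_h^{i+1}d$ ($0\le i<3$); all interpolants appearing are assumed defined. The discrete harmonic forms are $\mathfrak{H}_h=\operatorname{Ker}d_h\cap\operatorname{Ker}d_h^\ast$ ($d_h^\ast$ the $(\cdot,\cdot)_h$-adjoint), with orthogonal projector also denoted $P_{\mathfrak{H}}$ when acting on $\mathcal{H}_h$, and $\perp_h$ denotes orthogonal complement. For $V\in D(d^\star)$ and $W_h\in\mathcal{H}_h$, $\epsilon_h(V,W_h):=(I_hV,d_hW_h)_h-(I_hd^\star V,W_h)_h$, and $\|\ell\|_{1,h}^\ast:=\sup_{W_h\neq0}|\ell(W_h)|/\|W_h\|_{1,h}$ for a linear functional $\ell$ on $\mathcal{H}_h$. *)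

theory Defs
  imports "HOL-Analysis.Analysis"
begin

definition Jop :: "'a::ab_group_add \<times> 'b::ab_group_add \<times> 'c::ab_group_add \<times> 'd::ab_group_add
                   \<Rightarrow> 'a \<times> 'b \<times> 'c \<times> 'd" where
  "Jop = (\<lambda>(a, b, c, e). (a, - b, c, - e))"

definition dtot :: "('a \<Rightarrow> 'b) \<Rightarrow> ('b \<Rightarrow> 'c) \<Rightarrow> ('c \<Rightarrow> 'e)
                   \<Rightarrow> 'a \<times> 'b \<times> 'c \<times> 'e \<Rightarrow> 'a::zero \<times> 'b \<times> 'c \<times> 'e" where
  "dtot d0 d1 d2 = (\<lambda>(u0, u1, u2, u3). (0, d0 u0, d1 u1, d2 u2))"

definition diag4 :: "('a \<Rightarrow> 'a') \<Rightarrow> ('b \<Rightarrow> 'b') \<Rightarrow> ('c \<Rightarrow> 'c') \<Rightarrow> ('e \<Rightarrow> 'e')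
                   \<Rightarrow> 'a \<times> 'b \<times> 'c \<times> 'e \<Rightarrow> 'a' \<times> 'b' \<times> 'c' \<times> 'e'" where
  "diag4 f0 f1 f2 f3 = (\<lambda>(u0, u1, u2, u3). (f0 u0, f1 u1, f2 u2, f3 u3))"

definition lin_on :: "'a::real_vector set \<Rightarrow> ('a \<Rightarrow> 'b::real_vector) \<Rightarrow> bool" where
  "lin_on S f \<longleftrightarrow> subspace S \<and> (\<forall>x\<in>S. \<forall>y\<in>S. f (x + y) = f x + f y)
                  \<and> (\<forall>c. \<forall>x\<in>S. f (c *\<^sub>R x) = c *\<^sub>R f x)"

definition closed_op :: "'a::real_normed_vector set \<Rightarrow> ('a \<Rightarrow> 'b::real_normed_vector) \<Rightarrow> bool" where
  "closed_op D f \<longleftrightarrow> (\<forall>u x y. (\<forall>n. u n \<in> D) \<longrightarrow> u \<longlonglongrightarrow> x \<longrightarrow> (\<lambda>n. f (u n)) \<longlonglongrightarrow> y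
                         \<longrightarrow> x \<in> D \<and> f x = y)"

definition adj_dom :: "'a::real_inner set \<Rightarrow> ('a \<Rightarrow> 'b::real_inner) \<Rightarrow> 'b set" where
  "adj_dom D f = {v. \<exists>w. \<forall>u\<in>D. inner (f u) v = inner u w}"

definition adj :: "'a::real_inner set \<Rightarrow> ('a \<Rightarrow> 'b::real_inner) \<Rightarrow> 'b \<Rightarrow> 'a" where
  "adj D f v = (THE w. \<forall>u\<in>D. inner (f u) v = inner u w)"

text \<open>Orthogonal projection onto a set S (a closed subspace in all uses).\<close>
definition oproj :: "'a::real_inner set \<Rightarrow> 'a \<Rightarrow> 'a" where
  "oproj S x = (THE p. p \<in> S \<and> (\<forall>y\<in>S. inner (x - p) y = 0))"

definition ocompl :: "'a::real_inner set \<Rightarrow> 'a set" where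
  "ocompl S = {w. \<forall>y\<in>S. inner w y = 0}"

definition gnorm :: "('a::real_normed_vector \<Rightarrow> 'a) \<Rightarrow> 'a \<Rightarrow> real" where
  "gnorm dh V = norm V + norm (dh V)"

definition Lh :: "('a::real_inner \<times> 'b::real_inner \<times> 'c::real_inner \<times> 'e::real_inner
                   \<Rightarrow> 'a \<times> 'b \<times> 'c \<times> 'e) \<Rightarrow> _ \<Rightarrow> _ \<Rightarrow> real" where
  "Lh dh V W = inner (Jop (dh V)) W - inner V (Jop (dh W))"

definition dual_norm :: "('a::real_normed_vector \<Rightarrow> 'a) \<Rightarrow> ('a \<Rightarrow> real) \<Rightarrow> real" where
  "dual_norm dh l = (SUP W \<in> UNIV - {0}. \<bar>l W\<bar> / gnorm dh W)"

end

theory Submission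
  imports Defs
begin

lemma oproj_props:
  fixes S :: "'a::euclidean_space set"
  assumes S: "subspace S"
  shows "oproj S x \<in> S \<and> (\<forall>y\<in>S. inner (x - oproj S x) y = 0)"
proof -
  obtain y z where y: "y \<in> span S" and z: "\<And>w. w \<in> span S \<Longrightarrow> orthogonal z w"
    and xy: "x = y + z" by (rule orthogonal_subspace_decomp_exists[of S x]) (rule that)
  have spS: "span S = S" using S by (simp add: span_eq_iff)
  have yS: "y \<in> S" using y spS by simp
  have P: "y \<in> S \<and> (\<forall>w\<in>S. inner (x - y) w = 0)"
    using yS z xy spS by (simp add: orthogonal_def)
  have U: "p = y" if "p \<in> S \<and> (\<forall>w\<in>S. inner (x - p) w = 0)" for p
  proof -
    have "p - y \<in> S" using that P S subspace_diff by blast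
    then have "inner (x-p) (p-y) = 0" "inner (x-y) (p-y) = 0" using that P by auto
    then have "inner (p - y) (p - y) = 0"
      by (simp add: inner_diff_left inner_diff_right algebra_simps)
    thus ?thesis by simp
  qed
  have "oproj S x = y" unfolding oproj_def by (rule the_equality[where P="\<lambda>p. p \<in> S \<and> (\<forall>w\<in>S. inner (x - p) w = 0)", OF P U])
  thus ?thesis using P by simp
qed

lemma lin_on_zero: "lin_on S f \<Longrightarrow> f 0 = 0"
  unfolding lin_on_def by (metis scale_zero_left subspace_0)

lemma lin_on_add: "lin_on S f \<Longrightarrow> x \<in> S \<Longrightarrow> y \<in> S \<Longrightarrow> f (x + y) = f x + f y"
  unfolding lin_on_def by blast

lemma lin_on_neg: "lin_on S f \<Longrightarrow> x \<in> S \<Longrightarrow> f (- x) = - f x"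
  unfolding lin_on_def by (metis scaleR_minus1_left)

lemma lin_on_diff: "lin_on S f \<Longrightarrow> x \<in> S \<Longrightarrow> y \<in> S \<Longrightarrow> f (x - y) = f x - f y"
proof -
  assume a: "lin_on S f" "x \<in> S" "y \<in> S"
  then have "- y \<in> S" unfolding lin_on_def by (simp add: subspace_neg)
  then show ?thesis using a lin_on_add[of S f x "- y"] lin_on_neg[of S f y] by simp
qed

lemma lin_on_sub: "lin_on S f \<Longrightarrow> subspace S" unfolding lin_on_def by blast

lemma dtot_linear:
  assumes "linear f0" "linear f1" "linear f2"
  shows "linear (dtot f0 f1 f2)"
  using assms unfolding dtot_def
  by (intro linearI) (auto simp: linear_add linear_scale split: prod.splits)

lemma Jop_simp[simp]: "Jop (a, b, c, e) = (a, -b, c, -e)" by (simp add: Jop_def)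
lemma Jop_zero[simp]: "Jop 0 = 0" by (simp add: Jop_def zero_prod_def)
lemma dtot_simp[simp]: "dtot f0 f1 f2 (a, b, c, e) = (0, f0 a, f1 b, f2 c)" by (simp add: dtot_def)
lemma diag4_simp[simp]: "diag4 f0 f1 f2 f3 (a, b, c, e) = (f0 a, f1 b, f2 c, f3 e)" by (simp add: diag4_def)

theorem lemma4p13:
  fixes d0 :: "'x0::{real_inner,complete_space} \<Rightarrow> 'x1::{real_inner,complete_space}"
    and d1 :: "'x1 \<Rightarrow> 'x2::{real_inner,complete_space}"
    and d2 :: "'x2 \<Rightarrow> 'x3::{real_inner,complete_space}"
    and D0 :: "'x0 set" and D1 :: "'x1 set" and D2 :: "'x2 set"
    and dh0 :: "'h0::euclidean_space \<Rightarrow> 'h1::euclidean_space"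
    and dh1 :: "'h1 \<Rightarrow> 'h2::euclidean_space"
    and dh2 :: "'h2 \<Rightarrow> 'h3::euclidean_space"
    and I0 :: "'x0 \<Rightarrow> 'h0" and I1 :: "'x1 \<Rightarrow> 'h1" and I2 :: "'x2 \<Rightarrow> 'h2" and I3 :: "'x3 \<Rightarrow> 'h3"
    and Dom0 :: "'x0 set" and Dom1 :: "'x1 set" and Dom2 :: "'x2 set" and Dom3 :: "'x3 set"
    and U :: "real \<Rightarrow> 'x0 \<times> 'x1 \<times> 'x2 \<times> 'x3"
    and T :: real and N :: nat and t :: "nat \<Rightarrow> real"
    and TN :: "(nat \<Rightarrow> 'x0 \<times> 'x1 \<times> 'x2 \<times> 'x3) \<Rightarrow> 'x0 \<times> 'x1 \<times> 'x2 \<times> 'x3"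
    and Uhat :: "'h0 \<times> 'h1 \<times> 'h2 \<times> 'h3"
    and CL :: real
  defines "d \<equiv> dtot d0 d1 d2"
      and "DD \<equiv> D0 \<times> D1 \<times> D2 \<times> (UNIV :: 'x3 set)"
      and "dstar \<equiv> adj (D0 \<times> D1 \<times> D2 \<times> (UNIV :: 'x3 set)) (dtot d0 d1 d2)"
      and "harmC \<equiv> {u \<in> D0 \<times> D1 \<times> D2 \<times> (UNIV :: 'x3 set).
                      u \<in> adj_dom (D0 \<times> D1 \<times> D2 \<times> (UNIV :: 'x3 set)) (dtot d0 d1 d2)
                      \<and> dtot d0 d1 d2 u = 0
                      \<and> adj (D0 \<times> D1 \<times> D2 \<times> (UNIV :: 'x3 set)) (dtot d0 d1 d2) u = 0}"
      and "dh \<equiv> dtot dh0 dh1 dh2"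
      and "harmh \<equiv> {V. dtot dh0 dh1 dh2 V = 0 \<and> adjoint (dtot dh0 dh1 dh2) V = 0}"
      and "Ih \<equiv> diag4 I0 I1 I2 I3"
      and "Domh \<equiv> Dom0 \<times> Dom1 \<times> Dom2 \<times> Dom3"
      and "dtU \<equiv> (\<lambda>s. vector_derivative U (at s within {0..T}))"
      and "TNU \<equiv> TN (\<lambda>m. U (t m))"
  \<comment> \<open>continuous Hilbert complex (natural domains, densely defined, closed, d o d = 0)\<close>
  assumes lin_d0: "lin_on D0 d0" and lin_d1: "lin_on D1 d1" and lin_d2: "lin_on D2 d2"
    and dense_D0: "closure D0 = UNIV" and dense_D1: "closure D1 = UNIV" and dense_D2: "closure D2 = UNIV"
    and closed_d0: "closed_op D0 d0" and closed_d1: "closed_op D1 d1" and closed_d2: "closed_op D2 d2"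
    and cplx_01: "\<forall>u\<in>D0. d0 u \<in> D1 \<and> d1 (d0 u) = 0"
    and cplx_12: "\<forall>u\<in>D1. d1 u \<in> D2 \<and> d2 (d1 u) = 0"
  \<comment> \<open>discrete complex\<close>
    and lin_dh0: "linear dh0" and lin_dh1: "linear dh1" and lin_dh2: "linear dh2"
    and dh_cplx01: "\<forall>v. dh1 (dh0 v) = 0" and dh_cplx12: "\<forall>v. dh2 (dh1 v) = 0"
  \<comment> \<open>interpolators, linear on their domains, with the cochain property\<close>
    and lin_I0: "lin_on Dom0 I0" and lin_I1: "lin_on Dom1 I1"
    and lin_I2: "lin_on Dom2 I2" and lin_I3: "lin_on Dom3 I3"
    and cochain0: "\<forall>u\<in>Dom0 \<inter> D0. d0 u \<in> Dom1 \<and> dh0 (I0 u) = I1 (d0 u)"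
    and cochain1: "\<forall>u\<in>Dom1 \<inter> D1. d1 u \<in> Dom2 \<and> dh1 (I1 u) = I2 (d1 u)"
    and cochain2: "\<forall>u\<in>Dom2 \<inter> D2. d2 u \<in> Dom3 \<and> dh2 (I2 u) = I3 (d2 u)"
  \<comment> \<open>time grid and the linear map T^N on sequences indexed by 0..N\<close>
    and T_pos: "0 < T" and t0: "t 0 = 0" and t_mono: "\<forall>m<N. t m < t (Suc m)" and tN: "t N = T"
    and TN_add: "\<forall>v w. TN (\<lambda>m. v m + w m) = TN v + TN w"
    and TN_scale: "\<forall>c v. TN (\<lambda>m. c *\<^sub>R v m) = c *\<^sub>R TN v"
    and TN_loc: "\<forall>v w. (\<forall>m\<le>N. v m = w m) \<longrightarrow> TN v = TN w"
  \<comment> \<open>U in C^1([0,T];X) solving the continuous problem\<close>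
    and U_diff: "\<forall>s\<in>{0..T}. U differentiable (at s within {0..T})"
    and U_C1: "continuous_on {0..T} dtU"
    and U_dom: "\<forall>s\<in>{0..T}. U s \<in> DD \<and> U s \<in> adj_dom DD d"
    and U_eq: "\<forall>s\<in>{0..T}. dtU s = Jop (d (U s) + dstar (U s))"
  \<comment> \<open>all interpolants appearing are defined\<close>
    and def_U: "U T \<in> Domh" and def_dstarU: "dstar (U T) \<in> Domh"
    and def_TNU: "TNU \<in> Domh" and def_eps: "TNU - dtU (t N) \<in> Domh"
    and def_PU: "oproj harmC (U (t N)) \<in> Domh"
  \<comment> \<open>the discrete solution\<close>
    and Uhat_eq: "\<forall>V. Lh dh (Uhat - oproj harmh Uhat) V
                      = inner (Ih TNU - oproj harmh (Ih TNU)) V"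
    and Uhat_harm: "oproj harmh Uhat = Ih (oproj harmC (U (t N)))"
  \<comment> \<open>inf-sup constant\<close>
    and CL_pos: "0 < CL"
    and inf_sup: "\<forall>V\<in>ocompl harmh.
        (SUP W \<in> ocompl harmh - {0}. Lh dh V W / gnorm dh W) \<ge> CL * gnorm dh V"
  shows "gnorm dh ((Ih (U T) - Uhat) - oproj harmh (Ih (U T) - Uhat))
         \<le> (1 / CL) * (dual_norm dh (\<lambda>W. inner (Ih (U T)) (dh W) - inner (Ih (dstar (U T))) W)
                        + norm (Ih (TNU - dtU (t N))))"
proof -
  have dh_def: "dh = dtot dh0 dh1 dh2" using \<open>dh \<equiv> dtot dh0 dh1 dh2\<close> by simp
  have harmh_def: "harmh = {V. dh V = 0 \<and> adjoint dh V = 0}"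
    using \<open>harmh \<equiv> _\<close> dh_def by simp
  have Ih_def: "Ih = diag4 I0 I1 I2 I3" using \<open>Ih \<equiv> _\<close> by simp
  have Domh_def: "Domh = Dom0 \<times> Dom1 \<times> Dom2 \<times> Dom3" using \<open>Domh \<equiv> _\<close> by simp
  have d_def: "d = dtot d0 d1 d2" using \<open>d \<equiv> _\<close> by simp
  have DD_def: "DD = D0 \<times> D1 \<times> D2 \<times> (UNIV :: 'x3 set)" using \<open>DD \<equiv> _\<close> by simp
  have lindh: "linear dh" unfolding dh_def using lin_dh0 lin_dh1 lin_dh2 by (rule dtot_linear)
  have sub_harm: "subspace harmh" unfolding harmh_def
    using lindh adjoint_linear[OF lindh]
    by (auto simp: subspace_def linear_add linear_scale linear_0)
  have harm_orth: "inner Z (dh Y) = 0" if "Z \<in> harmh" for Z Y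
  proof -
    have "inner (dh Y) Z = inner Y (adjoint dh Z)" using adjoint_works[OF lindh] by simp
    also have "\<dots> = 0" using that by (simp add: harmh_def)
    finally show ?thesis by (simp add: inner_commute)
  qed
  have Jdh: "Jop (dh W) = dh (- fst W, fst (snd W), - fst (snd (snd W)), snd (snd (snd W)))" for W
    unfolding dh_def using lin_dh0 lin_dh1 lin_dh2
    by (cases W) (auto simp: linear_neg)
  have Lh_harm: "Lh dh Z W = 0" if "Z \<in> harmh" for Z W
    using that harm_orth[OF that] Jdh[of W] by (simp add: Lh_def harmh_def)
  have Lh_diff: "Lh dh (A - B) W = Lh dh A W - Lh dh B W" for A B W
  proof -
    have "Jop (dh (A - B)) = Jop (dh A) - Jop (dh B)"
      using linear_diff[OF lindh] by (simp add: Jop_def split: prod.splits)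
    thus ?thesis by (simp add: Lh_def inner_diff_left inner_diff_right)
  qed
  define P where "P = oproj harmh"
  have P: "P X \<in> harmh" "\<And>y. y \<in> harmh \<Longrightarrow> inner (X - P X) y = 0" for X
    using oproj_props[OF sub_harm, of X] unfolding P_def by auto
  have P_orth: "inner (X - P X) W = inner X W" if "W \<in> ocompl harmh" for X W
  proof -
    have "inner W (P X) = 0" using that P(1)[of X] unfolding ocompl_def by blast
    then have "inner (P X) W = 0" by (simp add: inner_commute)
    thus ?thesis by (simp add: inner_diff_left)
  qed
  have TT: "T \<in> {0..T}" using T_pos by simp
  obtain u0 u1 u2 u3 where u: "U T = (u0, u1, u2, u3)" by (cases "U T") auto
  obtain s0 s1 s2 s3 where s: "dstar (U T) = (s0, s1, s2, s3)" by (cases "dstar (U T)") auto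
  have uD: "u0 \<in> D0" "u1 \<in> D1" "u2 \<in> D2" proof -
    have "U T \<in> DD" using U_dom TT by blast
    thus "u0 \<in> D0" "u1 \<in> D1" "u2 \<in> D2" using u by (auto simp: DD_def)
  qed
  have uDom: "u0 \<in> Dom0" "u1 \<in> Dom1" "u2 \<in> Dom2" "u3 \<in> Dom3" using def_U u by (auto simp: Domh_def)
  have sDom: "s0 \<in> Dom0" "s1 \<in> Dom1" "s2 \<in> Dom2" "s3 \<in> Dom3" using def_dstarU s by (auto simp: Domh_def)
  have c0: "d0 u0 \<in> Dom1" "dh0 (I0 u0) = I1 (d0 u0)" using cochain0 uD uDom by auto
  have c1: "d1 u1 \<in> Dom2" "dh1 (I1 u1) = I2 (d1 u1)" using cochain1 uD uDom by auto
  have c2: "d2 u2 \<in> Dom3" "dh2 (I2 u2) = I3 (d2 u2)" using cochain2 uD uDom by auto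
  define g where "g = dtU (t N)"
  have g_eq: "g = (s0, - (d0 u0 + s1), d1 u1 + s2, - (d2 u2 + s3))"
    using U_eq TT tN u s unfolding g_def by (simp add: d_def)
  have sub0: "subspace Dom0" and sub1: "subspace Dom1" and sub2: "subspace Dom2" and sub3: "subspace Dom3"
    using lin_I0 lin_I1 lin_I2 lin_I3 lin_on_sub by blast+
  have a1: "d0 u0 + s1 \<in> Dom1" by (rule subspace_add[OF sub1 c0(1) sDom(2)])
  have a2: "d1 u1 + s2 \<in> Dom2" by (rule subspace_add[OF sub2 c1(1) sDom(3)])
  have a3: "d2 u2 + s3 \<in> Dom3" by (rule subspace_add[OF sub3 c2(1) sDom(4)])
  have e1: "I1 (- (d0 u0 + s1)) = - (I1 (d0 u0) + I1 s1)"
    by (simp only: lin_on_neg[OF lin_I1 a1] lin_on_add[OF lin_I1 c0(1) sDom(2)])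
  have e2: "I2 (d1 u1 + s2) = I2 (d1 u1) + I2 s2" by (rule lin_on_add[OF lin_I2 c1(1) sDom(3)])
  have e3: "I3 (- (d2 u2 + s3)) = - (I3 (d2 u2) + I3 s3)"
    by (simp only: lin_on_neg[OF lin_I3 a3] lin_on_add[OF lin_I3 c2(1) sDom(4)])
  have gDom: "g \<in> Domh" unfolding g_eq Domh_def mem_Times_iff fst_conv snd_conv
    using sDom subspace_neg[OF sub1 a1] a2 subspace_neg[OF sub3 a3] by blast
  have Ihg: "Ih g = (I0 s0, - (I1 (d0 u0) + I1 s1), I2 (d1 u1) + I2 s2, - (I3 (d2 u2) + I3 s3))"
    unfolding g_eq Ih_def diag4_simp e1 e2 e3 ..
  define eps where "eps = (\<lambda>W. inner (Ih (U T)) (dh W) - inner (Ih (dstar (U T))) W)"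
  have key1: "Lh dh (Ih (U T)) W = eps (Jop W) + inner (Ih g) W" for W
  proof -
    obtain w0 w1 w2 w3 where w: "W = (w0, w1, w2, w3)" by (cases W) auto
    show ?thesis
      unfolding eps_def Lh_def Ihg s unfolding u unfolding w Ih_def dh_def
      using c0 c1 c2 lin_dh0 lin_dh1 lin_dh2
      by (simp add: linear_neg inner_minus_left inner_minus_right inner_add_left algebra_simps)
  qed
  define X where "X = Ih (U T) - Uhat"
  define E where "E = X - P X"
  have Eorth: "E \<in> ocompl harmh" unfolding E_def ocompl_def using P(2) by auto
  have IhTN: "Ih (TNU - g) = Ih TNU - Ih g"
  proof -
    obtain a0 a1 a2 a3 where a: "TNU = (a0, a1, a2, a3)" by (cases TNU) auto
    obtain b0 b1 b2 b3 where b: "g = (b0, b1, b2, b3)" by (cases g) auto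
    show ?thesis using def_TNU gDom unfolding a b Ih_def Domh_def
      using lin_on_diff[OF lin_I0] lin_on_diff[OF lin_I1] lin_on_diff[OF lin_I2] lin_on_diff[OF lin_I3]
      by simp
  qed
  define n where "n = norm (Ih (TNU - g))"
  have key2: "Lh dh E W = eps (Jop W) - inner (Ih (TNU - g)) W" if W: "W \<in> ocompl harmh" for W
  proof -
    have e: "E = (Ih (U T) - (Uhat - P Uhat)) - (P X + P Uhat)" unfolding E_def X_def by simp
    have h: "P X + P Uhat \<in> harmh" using P(1) sub_harm by (simp add: subspace_add)
    have "Lh dh E W = Lh dh (Ih (U T) - (Uhat - P Uhat)) W - Lh dh (P X + P Uhat) W"
      unfolding e by (rule Lh_diff)
    also have "\<dots> = Lh dh (Ih (U T) - (Uhat - P Uhat)) W" using Lh_harm[OF h] by simp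
    also have "\<dots> = Lh dh (Ih (U T)) W - Lh dh (Uhat - P Uhat) W" by (rule Lh_diff)
    finally have "Lh dh E W = Lh dh (Ih (U T)) W - Lh dh (Uhat - P Uhat) W" .
    also have "Lh dh (Uhat - P Uhat) W = inner (Ih TNU) W"
    proof -
      have "Lh dh (Uhat - P Uhat) W = inner (Ih TNU - P (Ih TNU)) W"
        using Uhat_eq unfolding P_def by blast
      also have "\<dots> = inner (Ih TNU) W" by (rule P_orth[OF W])
      finally show ?thesis .
    qed
    finally show ?thesis using key1 IhTN by (simp add: inner_diff_left)
  qed
  have gnorm_pos: "gnorm dh W > 0" if "W \<noteq> 0" for W
    using that by (simp add: gnorm_def add_pos_nonneg)
  have gnorm_J: "gnorm dh (Jop W) = gnorm dh W" for W
    unfolding gnorm_def dh_def using lin_dh0 lin_dh1 lin_dh2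
    by (cases W) (simp add: linear_neg norm_Pair)
  have J0: "Jop W \<noteq> 0" if "W \<noteq> 0" for W using that by (cases W) (auto simp: zero_prod_def)
  define A where "A = norm (Ih (U T)) + norm (Ih (dstar (U T)))"
  have eps_bd: "\<bar>eps W\<bar> / gnorm dh W \<le> A" if "W \<noteq> 0" for W
  proof -
    have "\<bar>eps W\<bar> \<le> norm (Ih (U T)) * norm (dh W) + norm (Ih (dstar (U T))) * norm W"
      unfolding eps_def
      by (smt (verit) Cauchy_Schwarz_ineq2)
    also have "\<dots> \<le> A * gnorm dh W" unfolding A_def gnorm_def
      by (simp add: algebra_simps add_mono mult_left_mono)
    finally show ?thesis using gnorm_pos[OF that] by (simp add: divide_le_eq)
  qed
  have bdd: "bdd_above ((\<lambda>W. \<bar>eps W\<bar> / gnorm dh W) ` (UNIV - {0}))"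
    using eps_bd by (intro bdd_aboveI2[where M=A]) auto
  have dual_eq: "dual_norm dh eps = (SUP W \<in> UNIV - {0}. \<bar>eps W\<bar> / gnorm dh W)"
    unfolding dual_norm_def ..
  have eps_le: "\<bar>eps W\<bar> \<le> dual_norm dh eps * gnorm dh W" if "W \<noteq> 0" for W
  proof -
    have "\<bar>eps W\<bar> / gnorm dh W \<le> dual_norm dh eps"
      unfolding dual_eq using that by (intro cSUP_upper[OF _ bdd]) auto
    thus ?thesis using gnorm_pos[OF that] by (simp add: divide_le_eq mult.commute)
  qed
  obtain b :: "'h0 \<times> 'h1 \<times> 'h2 \<times> 'h3" where "b \<noteq> 0"
    using nonzero_Basis nonempty_Basis by blast
  have dual_nn: "dual_norm dh eps \<ge> 0"
    using eps_le[OF \<open>b \<noteq> 0\<close>] gnorm_pos[OF \<open>b \<noteq> 0\<close>]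
    by (smt (verit) mult_nonneg_nonneg zero_le_mult_iff)
  have n_nn: "n \<ge> 0" unfolding n_def by simp
  have Lbd: "Lh dh E W / gnorm dh W \<le> dual_norm dh eps + n" if "W \<in> ocompl harmh - {0}" for W
  proof -
    have W0: "W \<noteq> 0" and Wo: "W \<in> ocompl harmh" using that by auto
    have "\<bar>inner (Ih (TNU - g)) W\<bar> \<le> n * norm W" unfolding n_def by (rule Cauchy_Schwarz_ineq2)
    also have "\<dots> \<le> n * gnorm dh W" using n_nn by (intro mult_left_mono) (auto simp: gnorm_def)
    finally have "Lh dh E W \<le> (dual_norm dh eps + n) * gnorm dh W"
      using key2[OF Wo] eps_le[OF J0[OF W0]] gnorm_J[of W] by (simp add: algebra_simps)
    thus ?thesis using gnorm_pos[OF W0] by (simp add: divide_le_eq)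
  qed
  have main: "gnorm dh E \<le> (1 / CL) * (dual_norm dh eps + n)"
  proof (cases "E = 0")
    case True
    then show ?thesis using dual_nn n_nn CL_pos
      by (simp add: gnorm_def dh_def linear_0[OF lindh[unfolded dh_def]])
  next
    case False
    then have ne: "ocompl harmh - {0} \<noteq> {}" using Eorth by blast
    have "CL * gnorm dh E \<le> (SUP W \<in> ocompl harmh - {0}. Lh dh E W / gnorm dh W)"
      using inf_sup Eorth by blast
    also have "\<dots> \<le> dual_norm dh eps + n" using ne Lbd by (intro cSUP_least) auto
    finally show ?thesis using CL_pos by (simp add: field_simps)
  qed
  show ?thesis using main unfolding E_def X_def P_def n_def eps_def g_def by simp
qed

end
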